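(* Suppose $S\subseteq\{0,1\}^n$ and $f_t(\boldsymbol{x},\boldsymbol{\xi})=(\boldsymbol{A}^t\boldsymbol{x}+\boldsymbol{a}^t)^{\top}\boldsymbol{\xi}+(\boldsymbol{b}^t)^{\top}\boldsymbol{x}+h^t$ for all $t\in[T]$ (with $\boldsymbol{A}^t\in\mathbb{R}^{m\times n}$, $\boldsymbol{a}^t\in\mathbb{R}^m$, $\boldsymbol{b}^t\in\mathbb{R}^n$, $h^t\in\mathbb{R}$). Let $Z_{C_2}$ be the set of $\boldsymbol{x}\in\mathbb{R}^n$ for which there exist $\lambda\ge0$, $\alpha_t\ge0$, $s_i\ge0$, $\boldsymbol{z}_{it}\in\mathbb{R}^m$ satisfying the system ( * ): $\lambda\delta+\frac1N\sum_{i=1}^Ns_i\le\epsilon$; $G_{f_t}(\boldsymbol{z}_{it},\alpha_t,\boldsymbol{x})+1-\boldsymbol{z}_{it}^{\top}\boldsymbol{\zeta}^i-s_i\le0$ and $\|\boldsymbol{z}_{it}\|_*\le\lambda$ for all $i\in[N],t\in[T]$, where $G_{f_t}(\boldsymbol{z},\alpha,\boldsymbol{x})=\sup_{\boldsymbol{\xi}\in\Xi}[\boldsymbol{z}^{\top}\boldsymbol{\xi}-\alpha f_t(\boldsymbol{x},\boldsymbol{\xi})]$. Assume there is a vector $\boldsymbol{M}$ such that $\alpha_t\le M_t$ for all $t$ whenever $(\lambda,\boldsymbol{s},\boldsymbol{z},\boldsymbol{\alpha},\boldsymbol{x})$ satisfies ( * ) with $\boldsymbol{x}\in S$. Define $\hat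 f_t((\alpha_t,\boldsymbol{y}^t),\boldsymbol{\xi})=(\boldsymbol{A}^t\boldsymbol{y}^t+\boldsymbol{a}^t\alpha_t)^{\top}\boldsymbol{\xi}+(\boldsymbol{b}^t)^{\top}\boldsymbol{y}^t+h^t\alpha_t$ and let $\hat Z_{C_2}$ be the set of $\boldsymbol{x}\in\mathbb{R}^n$ for which there exist $\lambda\ge0$, $\alpha_t\ge0$, $s_i\ge0$, $\boldsymbol{z}_{it}\in\mathbb{R}^m$, $\boldsymbol{y}^t\in\mathbb{R}^n$ with $\lambda\delta+\frac1N\sum_{i=1}^Ns_i\le\epsilon$; $\sup_{\boldsymbol{\xi}\in\Xi}[\boldsymbol{z}_{it}^{\top}\boldsymbol{\xi}-\hat f_t((\alpha_t,\boldsymbol{y}^t),\boldsymbol{\xi})]+1-\boldsymbol{z}_{it}^{\top}\boldsymbol{\zeta}^i-s_i\le0$ for all $i\in[N],t\in[T]$; $0\le y^t_r\le M_tx_r$ and $\alpha_t-M_t(1-x_r)\le y^t_r\le\alpha_t$ for all $r\in[n],t\in[T]$; $\|\boldsymbol{z}_{it}\|_*\le\lambda$ for all $i\in[N],t\in[T]$. Then $\hat Z_{C_2}$ is convex and $S\cap\hat Z_{C_2}=S\cap Z_{C_2}\subseteq S\cap Z_D$, where $Z_D=\{\boldsymbol{x}\in\mathbb{R}^n:\inf_{\mathbb{P}\in\mathcal{P}_W}\mathbb{P}\{\boldsymbol{\xi}:f_t(\boldsymbol{x},\boldsymbol{\xi})\ge0\ \forall t\in[T]\}\ge1-\epsilo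n\}$.
   Context: Setting: $\epsilon\in(0,1)$, $\delta>0$, $[T]=\{1,\dots,T\}$; $\Xi\subseteq\mathbb{R}^m$ is a nonempty closed convex set; $\|\cdot\|$ is a norm on $\mathbb{R}^m$ with dual norm $\|\cdot\|_*$; $\boldsymbol{\zeta}^1,\dots,\boldsymbol{\zeta}^N\in\Xi$ are given samples with empirical distribution $\mathbb{P}_{\tilde\zeta}$ (mass $1/N$ each); $\mathcal{P}_W=\{\mathbb{P}:\mathbb{P}\{\boldsymbol{\xi}\in\Xi\}=1,\ W(\mathbb{P},\mathbb{P}_{\tilde\zeta})\le\delta\}$ with $W$ the 1-Wasserstein distance with transport cost $\|\boldsymbol{\xi}_1-\boldsymbol{\xi}_2\|$. *)

theory Defs
  imports "HOL-Analysis.Analysis" "HOL-Probability.Probability"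
begin

definition is_norm :: "(('a::real_vector) \<Rightarrow> real) \<Rightarrow> bool" where
  "is_norm nrm \<longleftrightarrow>
     (\<forall>x. nrm x \<ge> 0) \<and> (\<forall>x. nrm x = 0 \<longleftrightarrow> x = 0) \<and>
     (\<forall>c x. nrm (c *\<^sub>R x) = \<bar>c\<bar> * nrm x) \<and>
     (\<forall>x y. nrm (x + y) \<le> nrm x + nrm y)"

definition dual_norm :: "(('a::real_inner) \<Rightarrow> real) \<Rightarrow> 'a \<Rightarrow> real" where
  "dual_norm nrm z = Sup {z \<bullet> x | x. nrm x \<le> 1}"

definition fval ::
  "(nat \<Rightarrow> real^'n^'m) \<Rightarrow> (nat \<Rightarrow> real^'m) \<Rightarrow> (nat \<Rightarrow> real^'n) \<Rightarrow> (nat \<Rightarrow> real)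
   \<Rightarrow> nat \<Rightarrow> real^'n \<Rightarrow> real^'m \<Rightarrow> real" where
  "fval A a b h t x \<xi> = (A t *v x + a t) \<bullet> \<xi> + b t \<bullet> x + h t"

definition fhat ::
  "(nat \<Rightarrow> real^'n^'m) \<Rightarrow> (nat \<Rightarrow> real^'m) \<Rightarrow> (nat \<Rightarrow> real^'n) \<Rightarrow> (nat \<Rightarrow> real)
   \<Rightarrow> nat \<Rightarrow> real \<Rightarrow> real^'n \<Rightarrow> real^'m \<Rightarrow> real" where
  "fhat A a b h t \<alpha> y \<xi> = (A t *v y + \<alpha> *\<^sub>R a t) \<bullet> \<xi> + b t \<bullet> y + h t * \<alpha>"

definition Gf ::
  "(real^'m) set \<Rightarrow> (nat \<Rightarrow> real^'n^'m) \<Rightarrow> (nat \<Rightarrow> real^'m) \<Rightarrow> (nat \<Rightarrow> real^'n) \<Rightarrow> (nat \<Rightarrow> real)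
   \<Rightarrow> nat \<Rightarrow> real^'m \<Rightarrow> real \<Rightarrow> real^'n \<Rightarrow> ereal" where
  "Gf \<Xi> A a b h t z \<alpha> x = (SUP \<xi>\<in>\<Xi>. ereal (z \<bullet> \<xi> - \<alpha> * fval A a b h t x \<xi>))"

definition sysC2 ::
  "(real^'m \<Rightarrow> real) \<Rightarrow> (real^'m) set \<Rightarrow> real \<Rightarrow> real \<Rightarrow> nat \<Rightarrow> (nat \<Rightarrow> real^'m) \<Rightarrow> nat
   \<Rightarrow> (nat \<Rightarrow> real^'n^'m) \<Rightarrow> (nat \<Rightarrow> real^'m) \<Rightarrow> (nat \<Rightarrow> real^'n) \<Rightarrow> (nat \<Rightarrow> real)
   \<Rightarrow> real \<Rightarrow> (nat \<Rightarrow> real) \<Rightarrow> (nat \<Rightarrow> nat \<Rightarrow> real^'m) \<Rightarrow> (nat \<Rightarrow> real) \<Rightarrow> real^'n \<Rightarrow> bool" where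
  "sysC2 nrm \<Xi> \<epsilon> \<delta> N \<zeta> T A a b h lam s z \<alpha> x \<longleftrightarrow>
     lam \<ge> 0 \<and> (\<forall>t\<in>{1..T}. \<alpha> t \<ge> 0) \<and> (\<forall>i\<in>{1..N}. s i \<ge> 0) \<and>
     lam * \<delta> + (1 / real N) * (\<Sum>i=1..N. s i) \<le> \<epsilon> \<and>
     (\<forall>i\<in>{1..N}. \<forall>t\<in>{1..T}.
        Gf \<Xi> A a b h t (z i t) (\<alpha> t) x + ereal (1 - z i t \<bullet> \<zeta> i - s i) \<le> 0 \<and>
        dual_norm nrm (z i t) \<le> lam)"

definition ZC2 ::
  "(real^'m \<Rightarrow> real) \<Rightarrow> (real^'m) set \<Rightarrow> real \<Rightarrow> real \<Rightarrow> nat \<Rightarrow> (nat \<Rightarrow> real^'m) \<Rightarrow> nat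
   \<Rightarrow> (nat \<Rightarrow> real^'n^'m) \<Rightarrow> (nat \<Rightarrow> real^'m) \<Rightarrow> (nat \<Rightarrow> real^'n) \<Rightarrow> (nat \<Rightarrow> real)
   \<Rightarrow> (real^'n) set" where
  "ZC2 nrm \<Xi> \<epsilon> \<delta> N \<zeta> T A a b h =
     {x. \<exists>lam s z \<alpha>. sysC2 nrm \<Xi> \<epsilon> \<delta> N \<zeta> T A a b h lam s z \<alpha> x}"

definition ZC2hat ::
  "(real^'m \<Rightarrow> real) \<Rightarrow> (real^'m) set \<Rightarrow> real \<Rightarrow> real \<Rightarrow> nat \<Rightarrow> (nat \<Rightarrow> real^'m) \<Rightarrow> nat
   \<Rightarrow> (nat \<Rightarrow> real^'n^'m) \<Rightarrow> (nat \<Rightarrow> real^'m) \<Rightarrow> (nat \<Rightarrow> real^'n) \<Rightarrow> (nat \<Rightarrow> real)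
   \<Rightarrow> (nat \<Rightarrow> real) \<Rightarrow> (real^'n) set" where
  "ZC2hat nrm \<Xi> \<epsilon> \<delta> N \<zeta> T A a b h M =
     {x. \<exists>(lam::real) (s::nat \<Rightarrow> real) (z::nat \<Rightarrow> nat \<Rightarrow> real^'m) (\<alpha>::nat \<Rightarrow> real) (y::nat \<Rightarrow> real^'n).
        lam \<ge> 0 \<and> (\<forall>t\<in>{1..T}. \<alpha> t \<ge> 0) \<and> (\<forall>i\<in>{1..N}. s i \<ge> 0) \<and>
        lam * \<delta> + (1 / real N) * (\<Sum>i=1..N. s i) \<le> \<epsilon> \<and>
        (\<forall>i\<in>{1..N}. \<forall>t\<in>{1..T}.
           (SUP \<xi>\<in>\<Xi>. ereal (z i t \<bullet> \<xi> - fhat A a b h t (\<alpha> t) (y t) \<xi>))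
             + ereal (1 - z i t \<bullet> \<zeta> i - s i) \<le> 0) \<and>
        (\<forall>r. \<forall>t\<in>{1..T}. 0 \<le> y t $ r \<and> y t $ r \<le> M t * x $ r \<and>
                         \<alpha> t - M t * (1 - x $ r) \<le> y t $ r \<and> y t $ r \<le> \<alpha> t) \<and>
        (\<forall>i\<in>{1..N}. \<forall>t\<in>{1..T}. dual_norm nrm (z i t) \<le> lam)}"

definition coupling :: "('a::euclidean_space \<times> 'a) measure \<Rightarrow> 'a measure \<Rightarrow> 'a measure \<Rightarrow> bool" where
  "coupling \<pi> P Q \<longleftrightarrow> prob_space \<pi> \<and> sets \<pi> = sets borel \<and>
     distr \<pi> borel fst = P \<and> distr \<pi> borel snd = Q"

definition wasserstein :: "('a::euclidean_space \<Rightarrow> real) \<Rightarrow> 'a measure \<Rightarrow> 'a measure \<Rightarrow> ennreal" where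
  "wasserstein nrm P Q = (INF \<pi>\<in>{\<pi>. coupling \<pi> P Q}. \<integral>\<^sup>+ p. ennreal (nrm (fst p - snd p)) \<partial>\<pi>)"

definition empirical :: "nat \<Rightarrow> (nat \<Rightarrow> 'a::euclidean_space) \<Rightarrow> 'a measure" where
  "empirical N \<zeta> = distr (measure_pmf (pmf_of_set {1..N})) borel \<zeta>"

definition PW :: "('a::euclidean_space \<Rightarrow> real) \<Rightarrow> 'a set \<Rightarrow> real \<Rightarrow> nat \<Rightarrow> (nat \<Rightarrow> 'a) \<Rightarrow> 'a measure set" where
  "PW nrm \<Xi> \<delta> N \<zeta> = {P. prob_space P \<and> sets P = sets borel \<and> measure P \<Xi> = 1 \<and>
                        wasserstein nrm P (empirical N \<zeta>) \<le> ennreal \<delta>}"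

definition ZD ::
  "(real^'m \<Rightarrow> real) \<Rightarrow> (real^'m) set \<Rightarrow> real \<Rightarrow> real \<Rightarrow> nat \<Rightarrow> (nat \<Rightarrow> real^'m) \<Rightarrow> nat
   \<Rightarrow> (nat \<Rightarrow> real^'n^'m) \<Rightarrow> (nat \<Rightarrow> real^'m) \<Rightarrow> (nat \<Rightarrow> real^'n) \<Rightarrow> (nat \<Rightarrow> real)
   \<Rightarrow> (real^'n) set" where
  "ZD nrm \<Xi> \<epsilon> \<delta> N \<zeta> T A a b h =
     {x. (INF P\<in>PW nrm \<Xi> \<delta> N \<zeta>. ereal (measure P {\<xi>. \<forall>t\<in>{1..T}. fval A a b h t x \<xi> \<ge> 0}))
           \<ge> ereal (1 - \<epsilon>)}"

end

theory Submission
  imports Defs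
begin


lemma nrm_neg: assumes "is_norm nrm" shows "nrm (- x) = nrm x"
  using assms unfolding is_norm_def by (metis abs_minus_cancel abs_one mult_1 scaleR_minus1_left)

lemma nrm_zero: assumes "is_norm nrm" shows "nrm 0 = 0"
  using assms unfolding is_norm_def by blast

lemma nrm_sum: assumes "is_norm nrm" "finite I" shows "nrm (sum f I) \<le> (\<Sum>i\<in>I. nrm (f i))"
  using assms(2)
proof (induction rule: finite_induct)
  case empty then show ?case using nrm_zero[OF assms(1)] by simp
next
  case (insert x F)
  then show ?case using assms(1) unfolding is_norm_def by (simp, smt (verit))
qed

lemma nrm_upper: fixes nrm :: "'a::euclidean_space \<Rightarrow> real"
  assumes "is_norm nrm" shows "\<exists>C\<ge>0. \<forall>x. nrm x \<le> C * norm x"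
proof (intro exI[of _ "\<Sum>b\<in>Basis. nrm b"] conjI allI)
  show "0 \<le> (\<Sum>b\<in>Basis. nrm b)" using assms unfolding is_norm_def by (simp add: sum_nonneg)
  fix x :: 'a
  have "nrm x = nrm (\<Sum>b\<in>Basis. (x \<bullet> b) *\<^sub>R b)" by (simp add: euclidean_representation)
  also have "\<dots> \<le> (\<Sum>b\<in>Basis. nrm ((x \<bullet> b) *\<^sub>R b))" by (rule nrm_sum[OF assms]) simp
  also have "\<dots> = (\<Sum>b\<in>Basis. \<bar>x \<bullet> b\<bar> * nrm b)" using assms unfolding is_norm_def by simp
  also have "\<dots> \<le> (\<Sum>b\<in>Basis. norm x * nrm b)"
    apply (rule sum_mono) apply (rule mult_right_mono)
    using assms unfolding is_norm_def by (auto simp: Basis_le_norm)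
  finally show "nrm x \<le> (\<Sum>b\<in>Basis. nrm b) * norm x" by (simp add: sum_distrib_left mult.commute)
qed

lemma nrm_cont: fixes nrm :: "'a::euclidean_space \<Rightarrow> real"
  assumes "is_norm nrm" shows "continuous_on UNIV nrm"
proof -
  obtain C where C: "C \<ge> 0" "\<And>x. nrm x \<le> C * norm x" using nrm_upper[OF assms] by blast
  have tri: "nrm (x + y) \<le> nrm x + nrm y" for x y using assms unfolding is_norm_def by blast
  have "C-lipschitz_on UNIV nrm"
  proof (rule lipschitz_onI)
    fix x y :: 'a
    have "nrm x \<le> nrm y + nrm (x - y)" using tri[of y "x - y"] by simp
    moreover have "nrm y \<le> nrm x + nrm (y - x)" using tri[of x "y - x"] by simp
    moreover have "nrm (y - x) = nrm (x - y)" using nrm_neg[OF assms, of "x - y"] by simp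
    moreover have "nrm (x - y) \<le> C * dist x y" using C(2)[of "x - y"] by (simp add: dist_norm)
    ultimately show "dist (nrm x) (nrm y) \<le> C * dist x y" by (simp add: dist_real_def abs_le_iff)
  qed (use C in auto)
  then show ?thesis by (rule lipschitz_on_continuous_on)
qed

lemma nrm_lower: fixes nrm :: "'a::euclidean_space \<Rightarrow> real"
  assumes "is_norm nrm" shows "\<exists>c>0. \<forall>x. c * norm x \<le> nrm x"
proof -
  have ne: "sphere (0::'a) 1 \<noteq> {}" by simp
  obtain x0 where x0: "x0 \<in> sphere 0 1" "\<And>y. y \<in> sphere 0 1 \<Longrightarrow> nrm x0 \<le> nrm y"
    using continuous_attains_inf[OF compact_sphere ne continuous_on_subset[OF nrm_cont[OF assms]]] by blast
  have "x0 \<noteq> 0" using x0(1) by auto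
  then have pos: "nrm x0 > 0" using assms unfolding is_norm_def by (metis order_le_less)
  show ?thesis
  proof (intro exI[of _ "nrm x0"] conjI allI pos)
    fix x :: 'a
    show "nrm x0 * norm x \<le> nrm x"
    proof (cases "x = 0")
      case True then show ?thesis using nrm_zero[OF assms] by simp
    next
      case False
      have "nrm x0 \<le> nrm ((1 / norm x) *\<^sub>R x)" using x0(2) False by simp
      also have "\<dots> = nrm x / norm x" using assms unfolding is_norm_def by simp
      finally show ?thesis using False by (simp add: field_simps)
    qed
  qed
qed

lemma dual_bdd: fixes nrm :: "'a::euclidean_space \<Rightarrow> real"
  assumes "is_norm nrm" shows "bdd_above {z \<bullet> x | x. nrm x \<le> 1}"
proof -
  obtain c where c: "c > 0" "\<And>x. c * norm x \<le> nrm x" using nrm_lower[OF assms] by blast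
  show ?thesis
  proof (rule bdd_aboveI[of _ "norm z / c"], clarify)
    fix x :: 'a assume "nrm x \<le> 1"
    then have "norm x \<le> 1 / c" using c(2)[of x] c(1) by (simp add: field_simps)
    then have "norm z * norm x \<le> norm z * (1 / c)" by (rule mult_left_mono[OF _ norm_ge_zero])
    moreover have "z \<bullet> x \<le> norm z * norm x" using Cauchy_Schwarz_ineq2[of z x] by simp
    ultimately show "z \<bullet> x \<le> norm z / c" by simp
  qed
qed

lemma dual_le_iff: fixes nrm :: "'a::euclidean_space \<Rightarrow> real"
  assumes "is_norm nrm" shows "dual_norm nrm z \<le> L \<longleftrightarrow> (\<forall>x. nrm x \<le> 1 \<longrightarrow> z \<bullet> x \<le> L)"
proof
  assume "dual_norm nrm z \<le> L"
  show "\<forall>x. nrm x \<le> 1 \<longrightarrow> z \<bullet> x \<le> L"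
  proof (intro allI impI)
    fix x assume "nrm x \<le> 1"
    then have "z \<bullet> x \<in> {z \<bullet> x | x. nrm x \<le> 1}" by blast
    then have "z \<bullet> x \<le> dual_norm nrm z" unfolding dual_norm_def
      using cSup_upper[OF _ dual_bdd[OF assms]] by blast
    then show "z \<bullet> x \<le> L" using \<open>dual_norm nrm z \<le> L\<close> by simp
  qed
next
  assume "\<forall>x. nrm x \<le> 1 \<longrightarrow> z \<bullet> x \<le> L"
  moreover have "nrm 0 \<le> 1" using nrm_zero[OF assms] by simp
  ultimately show "dual_norm nrm z \<le> L" unfolding dual_norm_def
    by (intro cSup_least) auto
qed

lemma dual_app: fixes nrm :: "'a::euclidean_space \<Rightarrow> real"
  assumes "is_norm nrm" "dual_norm nrm z \<le> L" shows "z \<bullet> v \<le> L * nrm v"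
proof (cases "v = 0")
  case True then show ?thesis using nrm_zero[OF assms(1)] by simp
next
  case False
  then have p: "nrm v > 0" using assms(1) unfolding is_norm_def by (metis order_le_less)
  have "nrm ((1 / nrm v) *\<^sub>R v) \<le> 1" using assms(1) p unfolding is_norm_def by simp
  then have "z \<bullet> ((1 / nrm v) *\<^sub>R v) \<le> L" using assms dual_le_iff by blast
  then show ?thesis using p by (simp add: field_simps)
qed

lemma ereal_sup_le: "(SUP \<xi>\<in>X. ereal (F \<xi>)) + ereal c \<le> 0 \<longleftrightarrow> (\<forall>\<xi>\<in>X. F \<xi> + c \<le> 0)"
proof -
  have "(SUP \<xi>\<in>X. ereal (F \<xi>)) + ereal c \<le> 0 \<longleftrightarrow> (SUP \<xi>\<in>X. ereal (F \<xi>)) \<le> ereal (- c)"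
    by (cases "(SUP \<xi>\<in>X. ereal (F \<xi>))") auto
  also have "\<dots> \<longleftrightarrow> (\<forall>\<xi>\<in>X. F \<xi> + c \<le> 0)" by (auto simp: SUP_le_iff)
  finally show ?thesis .
qed



lemma fhat_scale: "fhat A a b h t \<alpha> (\<alpha> *\<^sub>R x) \<xi> = \<alpha> * fval A a b h t x \<xi>"
  unfolding fhat_def fval_def
  by (simp add: algebra_simps matrix_vector_mult_scaleR inner_add_left)

lemma fhat_lin: "fhat A a b h t (u * \<alpha>1 + v * \<alpha>2) (u *\<^sub>R y1 + v *\<^sub>R y2) \<xi>
   = u * fhat A a b h t \<alpha>1 y1 \<xi> + v * fhat A a b h t \<alpha>2 y2 \<xi>"
  unfolding fhat_def
  by (simp add: algebra_simps matrix_vector_mult_scaleR matrix_vector_right_distrib inner_add_left)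

lemma conv_le: fixes u v p1 p2 q1 q2 :: real
  shows "0 \<le> u \<Longrightarrow> 0 \<le> v \<Longrightarrow> p1 \<le> q1 \<Longrightarrow> p2 \<le> q2 \<Longrightarrow> u * p1 + v * p2 \<le> u * q1 + v * q2"
  by (intro add_mono mult_left_mono)



lemma convex_ZC2hat:
  fixes nrm :: "real^'m \<Rightarrow> real" and A :: "nat \<Rightarrow> real^'n^'m"
  assumes nrm: "is_norm nrm"
  shows "convex (ZC2hat nrm \<Xi> \<epsilon> \<delta> N \<zeta> T A a b h M)"
proof (rule convexI)
  fix x1 x2 :: "real^'n" and u v :: real
  assume x1: "x1 \<in> ZC2hat nrm \<Xi> \<epsilon> \<delta> N \<zeta> T A a b h M" and x2: "x2 \<in> ZC2hat nrm \<Xi> \<epsilon> \<delta> N \<zeta> T A a b h M"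
    and u: "0 \<le> u" and v: "0 \<le> v" and uv: "u + v = 1"
  from x1 obtain lam1 s1 z1 \<alpha>1 y1 where
    a1: "lam1 \<ge> 0" "\<forall>t\<in>{1..T}. \<alpha>1 t \<ge> 0" "\<forall>i\<in>{1..N}. s1 i \<ge> 0"
        "lam1 * \<delta> + (1 / real N) * (\<Sum>i=1..N. s1 i) \<le> \<epsilon>"
    and b1: "\<forall>i\<in>{1..N}. \<forall>t\<in>{1..T}. \<forall>\<xi>\<in>\<Xi>. z1 i t \<bullet> \<xi> - fhat A a b h t (\<alpha>1 t) (y1 t) \<xi> + (1 - z1 i t \<bullet> \<zeta> i - s1 i) \<le> 0"
    and c1: "\<forall>r. \<forall>t\<in>{1..T}. 0 \<le> y1 t $ r \<and> y1 t $ r \<le> M t * x1 $ r \<and>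
                         \<alpha>1 t - M t * (1 - x1 $ r) \<le> y1 t $ r \<and> y1 t $ r \<le> \<alpha>1 t"
    and d1: "\<forall>i\<in>{1..N}. \<forall>t\<in>{1..T}. \<forall>w. nrm w \<le> 1 \<longrightarrow> z1 i t \<bullet> w \<le> lam1"
    unfolding ZC2hat_def mem_Collect_eq ereal_sup_le dual_le_iff[OF nrm] by blast
  from x2 obtain lam2 s2 z2 \<alpha>2 y2 where
    a2: "lam2 \<ge> 0" "\<forall>t\<in>{1..T}. \<alpha>2 t \<ge> 0" "\<forall>i\<in>{1..N}. s2 i \<ge> 0"
        "lam2 * \<delta> + (1 / real N) * (\<Sum>i=1..N. s2 i) \<le> \<epsilon>"
    and b2: "\<forall>i\<in>{1..N}. \<forall>t\<in>{1..T}. \<forall>\<xi>\<in>\<Xi>. z2 i t \<bullet> \<xi> - fhat A a b h t (\<alpha>2 t) (y2 t) \<xi> + (1 - z2 i t \<bullet> \<zeta> i - s2 i) \<le> 0"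
    and c2: "\<forall>r. \<forall>t\<in>{1..T}. 0 \<le> y2 t $ r \<and> y2 t $ r \<le> M t * x2 $ r \<and>
                         \<alpha>2 t - M t * (1 - x2 $ r) \<le> y2 t $ r \<and> y2 t $ r \<le> \<alpha>2 t"
    and d2: "\<forall>i\<in>{1..N}. \<forall>t\<in>{1..T}. \<forall>w. nrm w \<le> 1 \<longrightarrow> z2 i t \<bullet> w \<le> lam2"
    unfolding ZC2hat_def mem_Collect_eq ereal_sup_le dual_le_iff[OF nrm] by blast
  have v1: "v = 1 - u" using uv by simp
  show "u *\<^sub>R x1 + v *\<^sub>R x2 \<in> ZC2hat nrm \<Xi> \<epsilon> \<delta> N \<zeta> T A a b h M"
    unfolding ZC2hat_def mem_Collect_eq ereal_sup_le dual_le_iff[OF nrm]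
  proof (rule exI[of _ "u * lam1 + v * lam2"], rule exI[of _ "\<lambda>i. u * s1 i + v * s2 i"],
      rule exI[of _ "\<lambda>i t. u *\<^sub>R z1 i t + v *\<^sub>R z2 i t"], rule exI[of _ "\<lambda>t. u * \<alpha>1 t + v * \<alpha>2 t"],
      rule exI[of _ "\<lambda>t. u *\<^sub>R y1 t + v *\<^sub>R y2 t"], intro conjI)
    show "0 \<le> u * lam1 + v * lam2" using a1 a2 u v by simp
    show "\<forall>t\<in>{1..T}. 0 \<le> u * \<alpha>1 t + v * \<alpha>2 t" using a1 a2 u v by simp
    show "\<forall>i\<in>{1..N}. 0 \<le> u * s1 i + v * s2 i" using a1 a2 u v by simp
    have "(u * lam1 + v * lam2) * \<delta> + 1 / real N * (\<Sum>i = 1..N. u * s1 i + v * s2 i)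
       = u * (lam1 * \<delta> + (1 / real N) * (\<Sum>i=1..N. s1 i)) + v * (lam2 * \<delta> + (1 / real N) * (\<Sum>i=1..N. s2 i))"
      by (simp add: sum.distrib sum_distrib_left algebra_simps)
    also have "\<dots> \<le> u * \<epsilon> + v * \<epsilon>" by (rule conv_le[OF u v a1(4) a2(4)])
    also have "\<dots> = \<epsilon>" using uv by (metis distrib_right mult_1)
    finally show "(u * lam1 + v * lam2) * \<delta> + 1 / real N * (\<Sum>i = 1..N. u * s1 i + v * s2 i) \<le> \<epsilon>" .
    show "\<forall>i\<in>{1..N}. \<forall>t\<in>{1..T}. \<forall>\<xi>\<in>\<Xi>. (u *\<^sub>R z1 i t + v *\<^sub>R z2 i t) \<bullet> \<xi> - fhat A a b h t (u * \<alpha>1 t + v * \<alpha>2 t) (u *\<^sub>R y1 t + v *\<^sub>R y2 t) \<xi> +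
           (1 - (u *\<^sub>R z1 i t + v *\<^sub>R z2 i t) \<bullet> \<zeta> i - (u * s1 i + v * s2 i)) \<le> 0"
    proof (intro ballI)
      fix i t \<xi> assume i: "i \<in> {1..N}" and t: "t \<in> {1..T}" and \<xi>: "\<xi> \<in> \<Xi>"
      have "(u *\<^sub>R z1 i t + v *\<^sub>R z2 i t) \<bullet> \<xi> - fhat A a b h t (u * \<alpha>1 t + v * \<alpha>2 t) (u *\<^sub>R y1 t + v *\<^sub>R y2 t) \<xi> +
           (1 - (u *\<^sub>R z1 i t + v *\<^sub>R z2 i t) \<bullet> \<zeta> i - (u * s1 i + v * s2 i))
          = u * (z1 i t \<bullet> \<xi> - fhat A a b h t (\<alpha>1 t) (y1 t) \<xi> + (1 - z1 i t \<bullet> \<zeta> i - s1 i))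
          + v * (z2 i t \<bullet> \<xi> - fhat A a b h t (\<alpha>2 t) (y2 t) \<xi> + (1 - z2 i t \<bullet> \<zeta> i - s2 i))"
        unfolding fhat_lin v1 by (simp add: algebra_simps inner_add_left)
      also have "\<dots> \<le> u * 0 + v * 0"
        by (rule conv_le[OF u v]) (use b1 b2 i t \<xi> in auto)
      finally show "(u *\<^sub>R z1 i t + v *\<^sub>R z2 i t) \<bullet> \<xi> - fhat A a b h t (u * \<alpha>1 t + v * \<alpha>2 t) (u *\<^sub>R y1 t + v *\<^sub>R y2 t) \<xi> +
           (1 - (u *\<^sub>R z1 i t + v *\<^sub>R z2 i t) \<bullet> \<zeta> i - (u * s1 i + v * s2 i)) \<le> 0" by simp
    qed
    show "\<forall>i\<in>{1..N}. \<forall>t\<in>{1..T}. \<forall>w. nrm w \<le> 1 \<longrightarrow> (u *\<^sub>R z1 i t + v *\<^sub>R z2 i t) \<bullet> w \<le> u * lam1 + v * lam2"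
    proof (intro ballI allI impI)
      fix i t and w :: "real^'m" assume i: "i \<in> {1..N}" and t: "t \<in> {1..T}" and "nrm w \<le> 1"
      then have "u * (z1 i t \<bullet> w) + v * (z2 i t \<bullet> w) \<le> u * lam1 + v * lam2"
        by (intro conv_le[OF u v]) (use d1 d2 i t in auto)
      then show "(u *\<^sub>R z1 i t + v *\<^sub>R z2 i t) \<bullet> w \<le> u * lam1 + v * lam2"
        by (simp add: inner_add_left)
    qed
    show "\<forall>r. \<forall>t\<in>{1..T}. 0 \<le> (u *\<^sub>R y1 t + v *\<^sub>R y2 t) $ r \<and> (u *\<^sub>R y1 t + v *\<^sub>R y2 t) $ r \<le> M t * (u *\<^sub>R x1 + v *\<^sub>R x2) $ r \<and>
       u * \<alpha>1 t + v * \<alpha>2 t - M t * (1 - (u *\<^sub>R x1 + v *\<^sub>R x2) $ r) \<le> (u *\<^sub>R y1 t + v *\<^sub>R y2 t) $ r \<and>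
       (u *\<^sub>R y1 t + v *\<^sub>R y2 t) $ r \<le> u * \<alpha>1 t + v * \<alpha>2 t"
    proof (intro allI ballI conjI)
    fix r t assume t: "t \<in> {1..T}"
    have e1: "0 \<le> y1 t $ r" "y1 t $ r \<le> M t * x1 $ r" "\<alpha>1 t - M t * (1 - x1 $ r) \<le> y1 t $ r" "y1 t $ r \<le> \<alpha>1 t"
      using c1 t by auto
    have e2: "0 \<le> y2 t $ r" "y2 t $ r \<le> M t * x2 $ r" "\<alpha>2 t - M t * (1 - x2 $ r) \<le> y2 t $ r" "y2 t $ r \<le> \<alpha>2 t"
      using c2 t by auto
    show "0 \<le> (u *\<^sub>R y1 t + v *\<^sub>R y2 t) $ r" using conv_le[OF u v e1(1) e2(1)] by simp
    show "(u *\<^sub>R y1 t + v *\<^sub>R y2 t) $ r \<le> M t * (u *\<^sub>R x1 + v *\<^sub>R x2) $ r"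
      using conv_le[OF u v e1(2) e2(2)] by (simp add: algebra_simps)
    show "u * \<alpha>1 t + v * \<alpha>2 t - M t * (1 - (u *\<^sub>R x1 + v *\<^sub>R x2) $ r) \<le> (u *\<^sub>R y1 t + v *\<^sub>R y2 t) $ r"
      using conv_le[OF u v e1(3) e2(3)] unfolding v1 by (simp add: algebra_simps)
    show "(u *\<^sub>R y1 t + v *\<^sub>R y2 t) $ r \<le> u * \<alpha>1 t + v * \<alpha>2 t"
      using conv_le[OF u v e1(4) e2(4)] by simp
    qed
  qed
qed



lemma sysC2_alt: "sysC2 nrm \<Xi> \<epsilon> \<delta> N \<zeta> T A a b h lam s z \<alpha> x \<longleftrightarrow>
     lam \<ge> 0 \<and> (\<forall>t\<in>{1..T}. \<alpha> t \<ge> 0) \<and> (\<forall>i\<in>{1..N}. s i \<ge> 0) \<and>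
     lam * \<delta> + (1 / real N) * (\<Sum>i=1..N. s i) \<le> \<epsilon> \<and>
     (\<forall>i\<in>{1..N}. \<forall>t\<in>{1..T}.
        (\<forall>\<xi>\<in>\<Xi>. z i t \<bullet> \<xi> - \<alpha> t * fval A a b h t x \<xi> + (1 - z i t \<bullet> \<zeta> i - s i) \<le> 0) \<and>
        dual_norm nrm (z i t) \<le> lam)"
  unfolding sysC2_def Gf_def ereal_sup_le by blast

lemma binary_y:
  assumes x: "\<forall>r. x $ r = 0 \<or> x $ r = 1"
    and c: "\<forall>r. 0 \<le> y $ r \<and> y $ r \<le> m * x $ r \<and> al - m * (1 - x $ r) \<le> y $ r \<and> y $ r \<le> al"
  shows "y = al *\<^sub>R (x :: real^'n)"
proof (rule vec_eq_iff[THEN iffD2], rule allI)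
  fix r
  from x have "x $ r = 0 \<or> x $ r = 1" by blast
  then show "y $ r = (al *\<^sub>R x) $ r" using c[rule_format, of r] by auto
qed

lemma part2:
  fixes nrm :: "real^'m \<Rightarrow> real" and A :: "nat \<Rightarrow> real^'n^'m" and S :: "(real^'n) set"
  assumes Sbin: "S \<subseteq> {x. \<forall>r. x $ r = 0 \<or> x $ r = 1}"
    and Mb: "\<forall>lam s z \<alpha> x. x \<in> S \<and> sysC2 nrm \<Xi> \<epsilon> \<delta> N \<zeta> T A a b h lam s z \<alpha> x
            \<longrightarrow> (\<forall>t\<in>{1..T}. \<alpha> t \<le> M t)"
  shows "S \<inter> ZC2hat nrm \<Xi> \<epsilon> \<delta> N \<zeta> T A a b h M = S \<inter> ZC2 nrm \<Xi> \<epsilon> \<delta> N \<zeta> T A a b h"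
proof (intro equalityI subsetI)
  fix x assume xin: "x \<in> S \<inter> ZC2hat nrm \<Xi> \<epsilon> \<delta> N \<zeta> T A a b h M"
  then have xS: "x \<in> S" and xb: "\<forall>r. x $ r = 0 \<or> x $ r = 1" using Sbin by auto
  from xin obtain lam s z \<alpha> y where
    a: "lam \<ge> 0" "\<forall>t\<in>{1..T}. \<alpha> t \<ge> 0" "\<forall>i\<in>{1..N}. s i \<ge> 0"
        "lam * \<delta> + (1 / real N) * (\<Sum>i=1..N. s i) \<le> \<epsilon>"
    and b: "\<forall>i\<in>{1..N}. \<forall>t\<in>{1..T}. \<forall>\<xi>\<in>\<Xi>. z i t \<bullet> \<xi> - fhat A a b h t (\<alpha> t) (y t) \<xi> + (1 - z i t \<bullet> \<zeta> i - s i) \<le> 0"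
    and c: "\<forall>r. \<forall>t\<in>{1..T}. 0 \<le> y t $ r \<and> y t $ r \<le> M t * x $ r \<and>
                         \<alpha> t - M t * (1 - x $ r) \<le> y t $ r \<and> y t $ r \<le> \<alpha> t"
    and d: "\<forall>i\<in>{1..N}. \<forall>t\<in>{1..T}. dual_norm nrm (z i t) \<le> lam"
    unfolding ZC2hat_def mem_Collect_eq ereal_sup_le by blast
  have yeq: "y t = \<alpha> t *\<^sub>R x" if "t \<in> {1..T}" for t
    by (rule binary_y[OF xb]) (use c that in blast)
  have "sysC2 nrm \<Xi> \<epsilon> \<delta> N \<zeta> T A a b h lam s z \<alpha> x"
    unfolding sysC2_alt using a b d yeq fhat_scale by (smt (verit))
  then show "x \<in> S \<inter> ZC2 nrm \<Xi> \<epsilon> \<delta> N \<zeta> T A a b h" using xS unfolding ZC2_def by blast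
next
  fix x assume xin: "x \<in> S \<inter> ZC2 nrm \<Xi> \<epsilon> \<delta> N \<zeta> T A a b h"
  then have xS: "x \<in> S" and xb: "\<forall>r. x $ r = 0 \<or> x $ r = 1" using Sbin by auto
  from xin obtain lam s z \<alpha> where sy: "sysC2 nrm \<Xi> \<epsilon> \<delta> N \<zeta> T A a b h lam s z \<alpha> x"
    unfolding ZC2_def by blast
  have aM: "\<forall>t\<in>{1..T}. \<alpha> t \<le> M t" using Mb xS sy by blast
  from sy have
    a: "lam \<ge> 0" "\<forall>t\<in>{1..T}. \<alpha> t \<ge> 0" "\<forall>i\<in>{1..N}. s i \<ge> 0"
        "lam * \<delta> + (1 / real N) * (\<Sum>i=1..N. s i) \<le> \<epsilon>"
    and b: "\<forall>i\<in>{1..N}. \<forall>t\<in>{1..T}. \<forall>\<xi>\<in>\<Xi>. z i t \<bullet> \<xi> - \<alpha> t * fval A a b h t x \<xi> + (1 - z i t \<bullet> \<zeta> i - s i) \<le> 0"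
    and d: "\<forall>i\<in>{1..N}. \<forall>t\<in>{1..T}. dual_norm nrm (z i t) \<le> lam"
    unfolding sysC2_alt by blast+
  have c: "\<forall>r. \<forall>t\<in>{1..T}. 0 \<le> (\<alpha> t *\<^sub>R x) $ r \<and> (\<alpha> t *\<^sub>R x) $ r \<le> M t * x $ r \<and>
                         \<alpha> t - M t * (1 - x $ r) \<le> (\<alpha> t *\<^sub>R x) $ r \<and> (\<alpha> t *\<^sub>R x) $ r \<le> \<alpha> t"
  proof (intro allI ballI)
    fix r t assume t: "t \<in> {1..T}"
    have "x $ r = 0 \<or> x $ r = 1" using xb by blast
    then show "0 \<le> (\<alpha> t *\<^sub>R x) $ r \<and> (\<alpha> t *\<^sub>R x) $ r \<le> M t * x $ r \<and>
                         \<alpha> t - M t * (1 - x $ r) \<le> (\<alpha> t *\<^sub>R x) $ r \<and> (\<alpha> t *\<^sub>R x) $ r \<le> \<alpha> t"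
      using a(2) aM t by auto
  qed
  have "x \<in> ZC2hat nrm \<Xi> \<epsilon> \<delta> N \<zeta> T A a b h M"
    unfolding ZC2hat_def mem_Collect_eq ereal_sup_le
    apply (rule exI[of _ lam], rule exI[of _ s], rule exI[of _ z], rule exI[of _ \<alpha>],
           rule exI[of _ "\<lambda>t. \<alpha> t *\<^sub>R x"])
    using a b c d by (simp add: fhat_scale)
  then show "x \<in> S \<inter> ZC2hat nrm \<Xi> \<epsilon> \<delta> N \<zeta> T A a b h M" using xS by blast
qed



lemma good_closed: "closed {\<xi>. \<forall>t\<in>{1..T}. 0 \<le> fval A a b h t x \<xi>}"
proof -
  have "{\<xi>. \<forall>t\<in>{1..T}. 0 \<le> fval A a b h t x \<xi>} = (\<Inter>t\<in>{1..T}. {\<xi>. 0 \<le> fval A a b h t x \<xi>})"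
    by auto
  then show ?thesis unfolding fval_def
    by (auto intro!: closed_INT closed_Collect_le continuous_intros)
qed

lemma g_props:
  fixes \<zeta> :: "nat \<Rightarrow> 'a" and s :: "nat \<Rightarrow> real"
  assumes s: "\<forall>i\<in>{1..N}. s i \<ge> 0"
  and Sam_def: "Sam = \<zeta> ` {1..N}"
  and g_def: "g = (\<lambda>w. \<Sum>v\<in>Sam. indicator {v} w * Min (s ` {i\<in>{1..N}. \<zeta> i = v}))"
  shows "\<And>w. g w \<ge> 0"
    and "\<And>w. w \<in> Sam \<Longrightarrow> \<exists>j\<in>{1..N}. \<zeta> j = w \<and> g w = s j"
    and "\<And>i. i \<in> {1..N} \<Longrightarrow> g (\<zeta> i) \<le> s i"
proof -
  have fin: "finite Sam" unfolding Sam_def by simp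
  have gw: "g w = (if w \<in> Sam then Min (s ` {i\<in>{1..N}. \<zeta> i = w}) else 0)" for w
  proof -
    have "g w = (\<Sum>v\<in>Sam. if w = v then Min (s ` {i\<in>{1..N}. \<zeta> i = v}) else 0)"
      unfolding g_def by (intro sum.cong) (auto simp: indicator_def)
    also have "\<dots> = (if w \<in> Sam then Min (s ` {i\<in>{1..N}. \<zeta> i = w}) else 0)"
      using fin by (simp add: sum.delta)
    finally show ?thesis .
  qed
  have att: "\<exists>j\<in>{1..N}. \<zeta> j = w \<and> g w = s j" if "w \<in> Sam" for w
  proof -
    have ne: "{i\<in>{1..N}. \<zeta> i = w} \<noteq> {}" using that unfolding Sam_def by auto
    have "Min (s ` {i\<in>{1..N}. \<zeta> i = w}) \<in> s ` {i\<in>{1..N}. \<zeta> i = w}"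
      by (rule Min_in) (use ne in auto)
    then show ?thesis using gw[of w] that by auto
  qed
  show "\<And>w. w \<in> Sam \<Longrightarrow> \<exists>j\<in>{1..N}. \<zeta> j = w \<and> g w = s j" by (rule att)
  show "g w \<ge> 0" for w
  proof (cases "w \<in> Sam")
    case True then obtain j where "j \<in> {1..N}" "g w = s j" using att by blast
    then show ?thesis using s by simp
  qed (simp add: gw)
  show "g (\<zeta> i) \<le> s i" if "i \<in> {1..N}" for i
  proof -
    have "\<zeta> i \<in> Sam" using that unfolding Sam_def by blast
    then have "g (\<zeta> i) = Min (s ` {j\<in>{1..N}. \<zeta> j = \<zeta> i})" using gw by simp
    also have "\<dots> \<le> s i" by (rule Min_le) (use that in auto)
    finally show ?thesis .
  qed
qed



lemma pointwise_bound:
  fixes nrm :: "real^'m \<Rightarrow> real" and A :: "nat \<Rightarrow> real^'n^'m"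
  assumes nrm: "is_norm nrm"
    and sy: "sysC2 nrm \<Xi> \<epsilon> \<delta> N \<zeta> T A a b h lam s z \<alpha> x"
    and j: "j \<in> {1..N}" and \<xi>: "\<xi> \<in> \<Xi>"
  shows "indicator (- {\<xi>. \<forall>t\<in>{1..T}. 0 \<le> fval A a b h t x \<xi>}) \<xi> \<le> s j + lam * nrm (\<xi> - \<zeta> j)"
proof -
  have lam: "lam \<ge> 0" and sj: "s j \<ge> 0" using sy j unfolding sysC2_alt by auto
  have nn: "nrm (\<xi> - \<zeta> j) \<ge> 0" using nrm unfolding is_norm_def by blast
  show ?thesis
  proof (cases "\<forall>t\<in>{1..T}. 0 \<le> fval A a b h t x \<xi>")
    case True then show ?thesis using lam sj nn by simp
  next
    case False
    then obtain t where t: "t \<in> {1..T}" and neg: "fval A a b h t x \<xi> < 0" by auto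
    have al: "\<alpha> t \<ge> 0" using sy t unfolding sysC2_alt by auto
    have c1: "z j t \<bullet> \<xi> - \<alpha> t * fval A a b h t x \<xi> + (1 - z j t \<bullet> \<zeta> j - s j) \<le> 0"
      and dn: "dual_norm nrm (z j t) \<le> lam"
      using sy t j \<xi> unfolding sysC2_alt by auto
    have "z j t \<bullet> (\<zeta> j - \<xi>) \<le> lam * nrm (\<zeta> j - \<xi>)" by (rule dual_app[OF nrm dn])
    moreover have "nrm (\<zeta> j - \<xi>) = nrm (\<xi> - \<zeta> j)" using nrm_neg[OF nrm, of "\<xi> - \<zeta> j"] by simp
    moreover have "\<alpha> t * fval A a b h t x \<xi> \<le> 0" using al neg by (simp add: mult_nonneg_nonpos)
    ultimately have "1 \<le> s j + lam * nrm (\<xi> - \<zeta> j)" using c1 by (simp add: inner_diff_right)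
    then show ?thesis using False by simp
  qed
qed



lemma coupling_bound:
  fixes nrm :: "real^'m \<Rightarrow> real" and A :: "nat \<Rightarrow> real^'n^'m"
    and \<pi> :: "((real^'m) \<times> (real^'m)) measure"
  assumes nrm: "is_norm nrm" and cl: "closed \<Xi>" and N: "N \<ge> 1"
    and sy: "sysC2 nrm \<Xi> \<epsilon> \<delta> N \<zeta> T A a b h lam s z \<alpha> x"
    and PXi: "measure P \<Xi> = 1" and Pp: "prob_space P"
    and cp: "coupling \<pi> P (empirical N \<zeta>)"
  shows "emeasure P (- {\<xi>. \<forall>t\<in>{1..T}. 0 \<le> fval A a b h t x \<xi>})
     \<le> ennreal ((\<Sum>i=1..N. s i) / real N) + ennreal lam * (\<integral>\<^sup>+ p. ennreal (nrm (fst p - snd p)) \<partial>\<pi>)"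
proof -
  define Bad where "Bad = - {\<xi>. \<forall>t\<in>{1..T}. 0 \<le> fval A a b h t x \<xi>}"
  define Sam where "Sam = \<zeta> ` {1..N}"
  define g where "g = (\<lambda>w. \<Sum>v\<in>Sam. indicator {v} w * Min (s ` {i\<in>{1..N}. \<zeta> i = v}))"
  have s0: "\<forall>i\<in>{1..N}. s i \<ge> 0" and lam: "lam \<ge> 0" using sy unfolding sysC2_alt by auto
  note gp = g_props[OF s0 Sam_def g_def]
  have Badm: "Bad \<in> sets borel" unfolding Bad_def
    by (intro borel_open open_Compl good_closed)
  have psets: "sets \<pi> = sets borel" and PD: "distr \<pi> borel fst = P" and ED: "distr \<pi> borel snd = empirical N \<zeta>"
    using cp unfolding coupling_def by auto
  have sp: "space \<pi> = UNIV" using sets_eq_imp_space_eq[OF psets] by simp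
  have meq: "measurable \<pi> X = measurable borel X" for X :: "'z measure"
    by (rule measurable_cong_sets[OF psets refl])
  have fstm: "fst \<in> measurable \<pi> (borel :: (real^'m) measure)" unfolding meq
    by (rule borel_measurable_continuous_onI) (intro continuous_intros)
  have sndm: "snd \<in> measurable \<pi> (borel :: (real^'m) measure)" unfolding meq
    by (rule borel_measurable_continuous_onI) (intro continuous_intros)
  have nrmm: "(\<lambda>p. nrm (fst p - snd p)) \<in> borel_measurable \<pi>" unfolding meq
    by (rule borel_measurable_continuous_onI)
       (intro continuous_on_compose2[OF nrm_cont[OF nrm]] continuous_intros, auto)
  have gm: "g \<in> borel_measurable borel" unfolding g_def
    by (intro borel_measurable_sum borel_measurable_times borel_measurable_indicator borel_measurable_const) auto
  have finSam: "finite Sam" unfolding Sam_def by simp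
  have Samm: "Sam \<in> sets borel" by (intro borel_closed finite_imp_closed finSam)
  have "AE \<xi> in P. \<xi> \<in> \<Xi>" using prob_space.AE_prob_1[OF Pp PXi] .
  then have "AE \<xi> in distr \<pi> borel fst. \<xi> \<in> \<Xi>" by (simp only: PD)
  then have ae1: "AE p in \<pi>. fst p \<in> \<Xi>" by (rule AE_distrD[OF fstm])
  have ne: "{1..N} \<noteq> {}" using N by auto
  have zm: "\<zeta> \<in> measurable (measure_pmf (pmf_of_set {1..N})) (borel :: (real^'m) measure)" by simp
  have "AE i in measure_pmf (pmf_of_set {1..N}). \<zeta> i \<in> Sam"
    using ne by (auto simp: AE_measure_pmf_iff Sam_def)
  then have "AE w in empirical N \<zeta>. w \<in> Sam" unfolding empirical_def
    using AE_distr_iff[OF zm, of "\<lambda>w. w \<in> Sam"] Samm by simp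
  then have "AE w in distr \<pi> borel snd. w \<in> Sam" by (simp only: ED)
  then have ae2: "AE p in \<pi>. snd p \<in> Sam" by (rule AE_distrD[OF sndm])
  have "emeasure P Bad = emeasure \<pi> (fst -` Bad \<inter> space \<pi>)"
    using emeasure_distr[OF fstm Badm] PD by simp
  also have "\<dots> = (\<integral>\<^sup>+ p. indicator (fst -` Bad \<inter> space \<pi>) p \<partial>\<pi>)"
    by (rule nn_integral_indicator[symmetric]) (use measurable_sets[OF fstm Badm] in simp)
  also have "\<dots> \<le> (\<integral>\<^sup>+ p. ennreal (g (snd p)) + ennreal lam * ennreal (nrm (fst p - snd p)) \<partial>\<pi>)"
  proof (rule nn_integral_mono_AE)
    show "AE p in \<pi>. indicator (fst -` Bad \<inter> space \<pi>) p \<le> ennreal (g (snd p)) + ennreal lam * ennreal (nrm (fst p - snd p))"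
      using ae1 ae2
    proof eventually_elim
      case (elim p)
      obtain j where j: "j \<in> {1..N}" "\<zeta> j = snd p" "g (snd p) = s j" using gp(2)[OF elim(2)] by blast
      have r: "indicator Bad (fst p) \<le> g (snd p) + lam * nrm (fst p - snd p)"
        using pointwise_bound[OF nrm sy j(1) elim(1)] j unfolding Bad_def by simp
      have nn: "nrm (fst p - snd p) \<ge> 0" using nrm unfolding is_norm_def by blast
      have "indicator (fst -` Bad \<inter> space \<pi>) p = ennreal (indicator Bad (fst p))"
        by (simp add: sp indicator_def)
      also have "\<dots> \<le> ennreal (g (snd p) + lam * nrm (fst p - snd p))" using r by (rule ennreal_leI)
      also have "\<dots> = ennreal (g (snd p)) + ennreal lam * ennreal (nrm (fst p - snd p))"
        using gp(1) lam nn by (simp add: ennreal_plus ennreal_mult)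
      finally show ?case .
    qed
  qed
  also have "\<dots> = (\<integral>\<^sup>+ p. ennreal (g (snd p)) \<partial>\<pi>) + ennreal lam * (\<integral>\<^sup>+ p. ennreal (nrm (fst p - snd p)) \<partial>\<pi>)"
  proof -
    have m1: "(\<lambda>p. ennreal (g (snd p))) \<in> borel_measurable \<pi>"
      using measurable_compose[OF sndm gm] by measurable
    have m2: "(\<lambda>p. ennreal (nrm (fst p - snd p))) \<in> borel_measurable \<pi>" using nrmm by measurable
    show ?thesis
      by (subst nn_integral_add) (use m1 m2 in \<open>auto simp: nn_integral_cmult\<close>)
  qed
  also have "(\<integral>\<^sup>+ p. ennreal (g (snd p)) \<partial>\<pi>) \<le> ennreal ((\<Sum>i=1..N. s i) / real N)"
  proof -
    have gem: "(\<lambda>w. ennreal (g w)) \<in> borel_measurable borel" using gm by measurable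
    have "(\<integral>\<^sup>+ p. ennreal (g (snd p)) \<partial>\<pi>) = (\<integral>\<^sup>+ w. ennreal (g w) \<partial>distr \<pi> borel snd)"
      by (rule nn_integral_distr[OF sndm, symmetric]) (use gem in simp)
    also have "\<dots> = (\<integral>\<^sup>+ w. ennreal (g w) \<partial>empirical N \<zeta>)" using ED by simp
    also have "\<dots> = (\<integral>\<^sup>+ i. ennreal (g (\<zeta> i)) \<partial>measure_pmf (pmf_of_set {1..N}))"
      unfolding empirical_def by (rule nn_integral_distr[OF zm]) (use gem in simp)
    also have "\<dots> = (\<Sum>i\<in>{1..N}. ennreal (g (\<zeta> i))) / card {1..N}"
      by (rule nn_integral_pmf_of_set[OF ne]) simp
    also have "\<dots> = ennreal (\<Sum>i\<in>{1..N}. g (\<zeta> i)) / ennreal (real N)"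
      using gp(1) by (simp add: ennreal_of_nat_eq_real_of_nat)
    also have "\<dots> = ennreal ((\<Sum>i\<in>{1..N}. g (\<zeta> i)) / real N)"
      using gp(1) N by (intro divide_ennreal) (auto intro: sum_nonneg)
    also have "\<dots> \<le> ennreal ((\<Sum>i=1..N. s i) / real N)"
      using gp(3) N by (intro ennreal_leI divide_right_mono sum_mono) auto
    finally show ?thesis .
  qed
  finally show ?thesis unfolding Bad_def by (simp add: add_right_mono)
qed



lemma part3_P:
  fixes nrm :: "real^'m \<Rightarrow> real" and A :: "nat \<Rightarrow> real^'n^'m"
  assumes nrm: "is_norm nrm" and cl: "closed \<Xi>" and N: "N \<ge> 1" and d0: "0 < \<delta>"
    and sy: "sysC2 nrm \<Xi> \<epsilon> \<delta> N \<zeta> T A a b h lam s z \<alpha> x"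
    and P: "P \<in> PW nrm \<Xi> \<delta> N \<zeta>"
  shows "1 - \<epsilon> \<le> measure P {\<xi>. \<forall>t\<in>{1..T}. 0 \<le> fval A a b h t x \<xi>}"
proof -
  define Good where "Good = {\<xi>. \<forall>t\<in>{1..T}. 0 \<le> fval A a b h t x \<xi>}"
  define F where "F = (\<lambda>\<pi>::((real^'m) \<times> (real^'m)) measure. \<integral>\<^sup>+ p. ennreal (nrm (fst p - snd p)) \<partial>\<pi>)"
  define C where "C = {\<pi>. coupling \<pi> P (empirical N \<zeta>)}"
  define c where "c = (\<Sum>i=1..N. s i) / real N"
  have Pp: "prob_space P" and Ps: "sets P = sets borel" and PXi: "measure P \<Xi> = 1"
    and W: "(INF \<pi>\<in>C. F \<pi>) \<le> ennreal \<delta>"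
    using P unfolding PW_def wasserstein_def C_def F_def by auto
  have s0: "\<forall>i\<in>{1..N}. s i \<ge> 0" and lam: "lam \<ge> 0"
    and sumc: "lam * \<delta> + (1 / real N) * (\<Sum>i=1..N. s i) \<le> \<epsilon>" using sy unfolding sysC2_alt by auto
  have c0: "c \<ge> 0" unfolding c_def using s0 by (auto intro!: divide_nonneg_nonneg sum_nonneg)
  have bound: "emeasure P (- Good) \<le> ennreal c + ennreal lam * F \<pi>" if "\<pi> \<in> C" for \<pi>
    using coupling_bound[OF nrm cl N sy PXi Pp, of \<pi>] that unfolding C_def F_def c_def Good_def by simp
  have Gm: "Good \<in> sets P" unfolding Ps Good_def by (intro borel_closed good_closed)
  have sp: "space P = UNIV" using sets_eq_imp_space_eq[OF Ps] by simp
  define bb where "bb = measure P (- Good)"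
  have eb: "emeasure P (- Good) = ennreal bb"
    unfolding bb_def by (rule finite_measure.emeasure_eq_measure[OF prob_space.axioms(1)[OF Pp]])
  obtain w where w: "(INF \<pi>\<in>C. F \<pi>) = ennreal w" "0 \<le> w" "w \<le> \<delta>"
    using W d0 by (metis ennreal_cases ennreal_le_iff less_imp_le top.extremum_uniqueI ennreal_neq_top)
  have Cne: "C \<noteq> {}" using w(1) by auto
  have key: "bb \<le> c + lam * w"
  proof (rule ccontr)
    assume "\<not> bb \<le> c + lam * w"
    then have gt: "c + lam * w < bb" by simp
    show False
    proof (cases "lam = 0")
      case True
      then obtain \<pi> where "\<pi> \<in> C" using Cne by blast
      from bound[OF this] have "ennreal bb \<le> ennreal c" using True eb by simp
      then have "bb \<le> c" using c0 by (simp add: ennreal_le_iff)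
      then show False using gt True by simp
    next
      case False
      then have lp: "lam > 0" using lam by simp
      define r where "r = (bb - c) / lam"
      have wr: "w < r" unfolding r_def using gt lp by (simp add: field_simps)
      have r0: "r \<ge> 0" using wr w(2) by simp
      have "(INF \<pi>\<in>C. F \<pi>) < ennreal r" using w(1) wr w(2) by (simp add: ennreal_lessI)
      then obtain \<pi> where pC: "\<pi> \<in> C" and Fr: "F \<pi> < ennreal r" by (auto simp: INF_less_iff)
      have "ennreal lam * F \<pi> < ennreal lam * ennreal r"
        by (rule ennreal_mult_strict_left_mono[OF Fr]) (use lp in auto)
      then have "ennreal c + ennreal lam * F \<pi> < ennreal c + ennreal lam * ennreal r"
        by (simp add: ennreal_add_left_cancel_less)
      also have "\<dots> = ennreal (c + lam * r)" using c0 lam r0 by (simp add: ennreal_plus ennreal_mult)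
      also have "c + lam * r = bb" unfolding r_def using lp by simp
      finally have "ennreal c + ennreal lam * F \<pi> < ennreal bb" .
      then show False using bound[OF pC] eb by simp
    qed
  qed
  have "lam * w \<le> lam * \<delta>" using w(3) lam by (rule mult_left_mono)
  then have "bb \<le> \<epsilon>" using key sumc unfolding c_def by simp
  moreover have "measure P Good = 1 - bb"
  proof -
    have "- Good = space P - Good" using sp by auto
    then show ?thesis unfolding bb_def using prob_space.prob_compl[OF Pp Gm] by simp
  qed
  ultimately show ?thesis unfolding Good_def by simp
qed

theorem theorem3:
  fixes nrm :: "real^'m \<Rightarrow> real"
    and \<Xi> :: "(real^'m) set"
    and \<epsilon> \<delta> :: real
    and N T :: nat
    and \<zeta> :: "nat \<Rightarrow> real^'m"
    and A :: "nat \<Rightarrow> real^'n^'m" and a :: "nat \<Rightarrow> real^'m"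
    and b :: "nat \<Rightarrow> real^'n" and h :: "nat \<Rightarrow> real"
    and S :: "(real^'n) set"
    and M :: "nat \<Rightarrow> real"
  assumes "0 < \<epsilon>" and "\<epsilon> < 1" and "0 < \<delta>"
    and "is_norm nrm"
    and "\<Xi> \<noteq> {}" and "closed \<Xi>" and "convex \<Xi>"
    and "N \<ge> 1" and "\<forall>i\<in>{1..N}. \<zeta> i \<in> \<Xi>"
    and "S \<subseteq> {x. \<forall>r. x $ r = 0 \<or> x $ r = 1}"
    and "\<forall>lam s z \<alpha> x. x \<in> S \<and> sysC2 nrm \<Xi> \<epsilon> \<delta> N \<zeta> T A a b h lam s z \<alpha> x
            \<longrightarrow> (\<forall>t\<in>{1..T}. \<alpha> t \<le> M t)"
  shows "convex (ZC2hat nrm \<Xi> \<epsilon> \<delta> N \<zeta> T A a b h M) \<and>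
         S \<inter> ZC2hat nrm \<Xi> \<epsilon> \<delta> N \<zeta> T A a b h M = S \<inter> ZC2 nrm \<Xi> \<epsilon> \<delta> N \<zeta> T A a b h \<and>
         S \<inter> ZC2 nrm \<Xi> \<epsilon> \<delta> N \<zeta> T A a b h \<subseteq> S \<inter> ZD nrm \<Xi> \<epsilon> \<delta> N \<zeta> T A a b h"
proof -
  have c1: "convex (ZC2hat nrm \<Xi> \<epsilon> \<delta> N \<zeta> T A a b h M)" by (rule convex_ZC2hat[OF assms(4)])
  have c2: "S \<inter> ZC2hat nrm \<Xi> \<epsilon> \<delta> N \<zeta> T A a b h M = S \<inter> ZC2 nrm \<Xi> \<epsilon> \<delta> N \<zeta> T A a b h"
    by (rule part2[OF assms(10) assms(11)])
  have c3: "S \<inter> ZC2 nrm \<Xi> \<epsilon> \<delta> N \<zeta> T A a b h \<subseteq> S \<inter> ZD nrm \<Xi> \<epsilon> \<delta> N \<zeta> T A a b h"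
  proof
    fix x assume x: "x \<in> S \<inter> ZC2 nrm \<Xi> \<epsilon> \<delta> N \<zeta> T A a b h"
    then obtain lam s z \<alpha> where sy: "sysC2 nrm \<Xi> \<epsilon> \<delta> N \<zeta> T A a b h lam s z \<alpha> x"
      unfolding ZC2_def by blast
    have "x \<in> ZD nrm \<Xi> \<epsilon> \<delta> N \<zeta> T A a b h"
      unfolding ZD_def mem_Collect_eq
    proof (rule INF_greatest)
      fix P assume "P \<in> PW nrm \<Xi> \<delta> N \<zeta>"
      from part3_P[OF assms(4) assms(6) assms(8) assms(3) sy this]
      show "ereal (1 - \<epsilon>) \<le> ereal (measure P {\<xi>. \<forall>t\<in>{1..T}. 0 \<le> fval A a b h t x \<xi>})" by simp
    qed
    then show "x \<in> S \<inter> ZD nrm \<Xi> \<epsilon> \<delta> N \<zeta> T A a b h" using x by blast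
  qed
  show ?thesis using c1 c2 c3 by blast
qed

end
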